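(* Let $\Pi'\subseteq\Pi$ be nonempty and let $t\ge1$. Then there exists a distribution $P$ over $\Pi'$ such that for all $\pi\in\Pi'$, \[\mathbb{E}_{x\sim D_X}\Bigl[\frac{1}{(1-K\mu_t)W_{P}(x,\pi(x))+\mu_t}\Bigr]\le 2K.\]
   Context: $A$ is a set of $K$ actions, $X$ a set of contexts, $\Pi$ a finite set of $N$ policies $\pi:X\to A$, $D_X$ a distribution on $X$, $\delta\in(0,1)$. $\delta_t=\delta/(4Nt^2)$ and $\mu_t=\min\{\frac1{2K},\sqrt{\ln(1/\delta_t)/(2Kt)}\}$. For a distribution $P$ over $\Pi'$, $W_P(x,a)=\sum_{\pi\in\Pi':\pi(x)=a}P(\pi)$. (This is the feasibility of the distribution-selection step of the PolicyElimination algorithm, where $\Pi'$ is the current nonempty set $\Pi_{t-1}$ of surviving policies.) *)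

theory Defs
  imports "HOL-Probability.Probability"
begin

definition delta_t :: "real \<Rightarrow> nat \<Rightarrow> nat \<Rightarrow> real" where
  "delta_t \<delta> N t = \<delta> / (4 * real N * (real t)^2)"

definition mu_t :: "real \<Rightarrow> nat \<Rightarrow> nat \<Rightarrow> nat \<Rightarrow> real" where
  "mu_t \<delta> K N t = min (1 / (2 * real K))
      (sqrt (ln (1 / delta_t \<delta> N t) / (2 * real K * real t)))"

definition is_distr :: "('x \<Rightarrow> 'a) set \<Rightarrow> (('x \<Rightarrow> 'a) \<Rightarrow> real) \<Rightarrow> bool" where
  "is_distr Pol' P \<longleftrightarrow> (\<forall>\<pi>. P \<pi> \<ge> 0) \<and> (\<forall>\<pi>. \<pi> \<notin> Pol' \<longrightarrow> P \<pi> = 0)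
     \<and> (\<Sum>\<pi>\<in>Pol'. P \<pi>) = 1"

definition W :: "('x \<Rightarrow> 'a) set \<Rightarrow> (('x \<Rightarrow> 'a) \<Rightarrow> real) \<Rightarrow> 'x \<Rightarrow> 'a \<Rightarrow> real" where
  "W Pol' P x a = (\<Sum>\<pi>\<in>{\<pi>\<in>Pol'. \<pi> x = a}. P \<pi>)"

end

theory Submission imports Defs begin

lemma ln_diff_ge: "0<x \<Longrightarrow> 0<(y::real) \<Longrightarrow> (y - x)/y \<le> ln y - ln x"
proof -
  assume x: "0<x" and y: "0<y"
  have "ln (x/y) \<le> x/y - 1" using x y by (intro ln_le_minus_one) simp
  moreover have "ln (x/y) = ln x - ln y" using x y by (simp add: ln_div)
  moreover have "(y - x)/y = 1 - x/y" using y by (simp add: field_simps)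
  ultimately show ?thesis by simp
qed

lemma compact_distr: "finite Pol' \<Longrightarrow> compact {P. is_distr Pol' (P::('x\<Rightarrow>'a) \<Rightarrow> real)}"
proof -
  assume fin: "finite Pol'"
  define S where "S = (\<lambda>\<pi>::'x\<Rightarrow>'a. if \<pi>\<in>Pol' then {0..1::real} else {0})"
  have "compactin (product_topology (\<lambda>_. euclideanreal) UNIV) (PiE UNIV S)"
    by (subst compactin_PiE) (auto simp: S_def)
  hence c1: "compact (PiE UNIV S)" by (simp add: euclidean_product_topology)
  have c2: "closed {P::('x\<Rightarrow>'a)\<Rightarrow>real. (\<Sum>\<pi>\<in>Pol'. P \<pi>) = 1}"
    by (intro closed_Collect_eq continuous_intros continuous_on_product_coordinates)
  have eq: "{P. is_distr Pol' P} = PiE UNIV S \<inter> {P. (\<Sum>\<pi>\<in>Pol'. P \<pi>) = 1}"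
  proof (intro set_eqI iffI)
    fix P assume "P \<in> {P. is_distr Pol' P}"
    hence d: "is_distr Pol' P" by simp
    have "\<And>\<pi>. \<pi>\<in>Pol' \<Longrightarrow> P \<pi> \<le> 1"
    proof -
      fix \<pi> assume "\<pi>\<in>Pol'"
      hence "P \<pi> \<le> (\<Sum>\<pi>\<in>Pol'. P \<pi>)" using d fin by (intro member_le_sum) (auto simp: is_distr_def)
      thus "P \<pi> \<le> 1" using d by (simp add: is_distr_def)
    qed
    thus "P \<in> PiE UNIV S \<inter> {P. (\<Sum>\<pi>\<in>Pol'. P \<pi>) = 1}" using d by (auto simp: S_def is_distr_def)
  next
    fix P assume "P \<in> PiE UNIV S \<inter> {P. (\<Sum>\<pi>\<in>Pol'. P \<pi>) = 1}"
    thus "P \<in> {P. is_distr Pol' P}" unfolding is_distr_def S_def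
      by (auto simp: PiE_iff split: if_splits)
  qed
  show ?thesis unfolding eq by (rule compact_Int_closed[OF c1 c2])
qed


lemma finite_main:
  fixes Q :: "(('x\<Rightarrow>'a) \<Rightarrow> 'a) set" and q :: "(('x\<Rightarrow>'a) \<Rightarrow> 'a) \<Rightarrow> real"
    and Pol' :: "('x\<Rightarrow>'a) set" and A :: "'a set" and c \<mu> :: real
  assumes finQ: "finite Q" and finP: "finite Pol'" and ne: "Pol' \<noteq> {}" and finA: "finite A"
    and qnn: "\<forall>s\<in>Q. q s \<ge> 0" and qsum: "(\<Sum>s\<in>Q. q s) = 1"
    and inA: "\<forall>s\<in>Q. \<forall>\<pi>\<in>Pol'. s \<pi> \<in> A"
    and mu: "0 < \<mu>" and cpos: "0 < c" and cmu: "1/2 \<le> c + \<mu>"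
  shows "\<exists>P. is_distr Pol' P \<and> (\<forall>\<pi>0\<in>Pol'.
     (\<Sum>s\<in>Q. q s / (c * (\<Sum>\<pi>\<in>{\<pi>\<in>Pol'. s \<pi> = s \<pi>0}. P \<pi>) + \<mu>)) \<le> 2 * real (card A))"
proof -
  define w :: "(('x\<Rightarrow>'a)\<Rightarrow>real) \<Rightarrow> (('x\<Rightarrow>'a)\<Rightarrow>'a) \<Rightarrow> 'a \<Rightarrow> real" where "w = (\<lambda>P s a. (\<Sum>\<pi>\<in>{\<pi>\<in>Pol'. s \<pi> = a}. P \<pi>::real))"
  define \<Delta> where "\<Delta> = {P. is_distr Pol' P}"
  define \<Phi> where "\<Phi> = (\<lambda>P. \<Sum>s\<in>Q. q s * (\<Sum>a\<in>A. ln (c * w P s a + \<mu>)))"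
  have w01: "0 \<le> w P s a \<and> w P s a \<le> 1" if "P \<in> \<Delta>" for P s a
  proof -
    have d: "is_distr Pol' P" using that by (simp add: \<Delta>_def)
    have "w P s a \<le> (\<Sum>\<pi>\<in>Pol'. P \<pi>)" unfolding w_def
      using d finP by (intro sum_mono2) (auto simp: is_distr_def)
    moreover have "0 \<le> w P s a" unfolding w_def using d by (intro sum_nonneg) (auto simp: is_distr_def)
    ultimately show ?thesis using d by (simp add: is_distr_def)
  qed
  have argpos: "0 < c * w P s a + \<mu>" if "P \<in> \<Delta>" for P s a
    using w01[OF that, of s a] cpos mu by (simp add: add_nonneg_pos)
  have cont: "continuous_on \<Delta> \<Phi>"
    unfolding \<Phi>_def w_def
    apply (intro continuous_intros)
     apply (rule continuous_on_subset[OF continuous_on_product_coordinates], simp)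
    using argpos unfolding w_def by (metis less_irrefl)
  have nonempty: "\<Delta> \<noteq> {}"
  proof -
    define P0 where "P0 = (\<lambda>\<pi>. if \<pi>\<in>Pol' then 1 / real (card Pol') else (0::real))"
    have "card Pol' > 0" using finP ne by (simp add: card_gt_0_iff)
    hence "is_distr Pol' P0" unfolding is_distr_def P0_def by auto
    thus ?thesis unfolding \<Delta>_def by auto
  qed
  obtain P where P: "P \<in> \<Delta>" and Pmax: "\<forall>P'\<in>\<Delta>. \<Phi> P' \<le> \<Phi> P"
    using continuous_attains_sup[OF _ nonempty cont] compact_distr[OF finP] unfolding \<Delta>_def by blast
  have main: "(\<Sum>s\<in>Q. q s / (c * w P s (s \<pi>0) + \<mu>)) \<le> 2 * real (card A)" if \<pi>0: "\<pi>0 \<in> Pol'" for \<pi>0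
  proof -
    define ind :: "(('x\<Rightarrow>'a)\<Rightarrow>'a) \<Rightarrow> 'a \<Rightarrow> real" where "ind = (\<lambda>s a. if s \<pi>0 = a then 1 else (0::real))"
    define G where "G = (\<lambda>e. \<Sum>s\<in>Q. q s * (\<Sum>a\<in>A. (ind s a - w P s a) /
          (c * ((1 - e) * w P s a + e * ind s a) + \<mu>)))"
    have Gle: "G e \<le> 0" if e: "0 < e" "e < 1" for e
    proof -
      define Pe where "Pe = (\<lambda>\<pi>. (1 - e) * P \<pi> + (if \<pi> = \<pi>0 then e else 0))"
      have dP: "is_distr Pol' P" using P by (simp add: \<Delta>_def)
      have wPe: "w Pe s a = (1 - e) * w P s a + e * ind s a" for s a
      proof -
        have "w Pe s a = (1 - e) * w P s a + (\<Sum>\<pi>\<in>{\<pi>\<in>Pol'. s \<pi> = a}. (if \<pi> = \<pi>0 then e else 0))"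
          unfolding w_def Pe_def by (simp add: sum.distrib sum_distrib_left)
        also have "(\<Sum>\<pi>\<in>{\<pi>\<in>Pol'. s \<pi> = a}. (if \<pi> = \<pi>0 then e else 0)) = e * ind s a"
          using finP \<pi>0 by (simp add: sum.delta' ind_def)
        finally show ?thesis .
      qed
      have "Pe \<in> \<Delta>"
      proof -
        have "(\<Sum>\<pi>\<in>Pol'. Pe \<pi>) = (1 - e) * (\<Sum>\<pi>\<in>Pol'. P \<pi>) + e"
          unfolding Pe_def using finP \<pi>0 by (simp add: sum.distrib sum_distrib_left sum.delta')
        thus ?thesis using dP e \<pi>0 unfolding \<Delta>_def is_distr_def Pe_def by auto
      qed
      hence le: "\<Phi> Pe \<le> \<Phi> P" using Pmax by blast
      have "c * e * G e \<le> \<Phi> Pe - \<Phi> P"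
      proof -
        have "c * e * G e = (\<Sum>s\<in>Q. q s * (\<Sum>a\<in>A. ((c * w Pe s a + \<mu>) - (c * w P s a + \<mu>)) / (c * w Pe s a + \<mu>)))"
          unfolding G_def wPe by (simp add: sum_distrib_left algebra_simps)
        also have "\<dots> \<le> (\<Sum>s\<in>Q. q s * (\<Sum>a\<in>A. ln (c * w Pe s a + \<mu>) - ln (c * w P s a + \<mu>)))"
          using qnn argpos[OF P] argpos[OF \<open>Pe \<in> \<Delta>\<close>]
          by (intro sum_mono mult_left_mono ln_diff_ge) auto
        also have "\<dots> = \<Phi> Pe - \<Phi> P" unfolding \<Phi>_def
          by (simp add: sum_subtractf right_diff_distrib sum.distrib[symmetric])
        finally show ?thesis .
      qed
      hence "c * e * G e \<le> 0" using le by simp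
      moreover have "c * e > 0" using cpos e by simp
      ultimately show ?thesis using cpos e by (auto simp: mult_le_0_iff)
    qed
    have lim: "(G \<longlongrightarrow> G 0) (at_right 0)"
      unfolding G_def
      using argpos[OF P]
      by (intro tendsto_intros) (auto simp: ind_def, metis less_irrefl)
    have G0: "G 0 \<le> 0"
    proof (rule tendsto_upperbound[OF lim])
      show "\<forall>\<^sub>F x in at_right 0. G x \<le> 0"
        unfolding eventually_at_right_field by (intro exI[of _ 1]) (auto intro: Gle)
    qed simp
    have G0eq: "G 0 = (\<Sum>s\<in>Q. q s / (c * w P s (s \<pi>0) + \<mu>)) -
        (\<Sum>s\<in>Q. q s * (\<Sum>a\<in>A. w P s a / (c * w P s a + \<mu>)))"
    proof -
      have "\<And>s. s \<in> Q \<Longrightarrow> (\<Sum>a\<in>A. ind s a / (c * w P s a + \<mu>)) = 1 / (c * w P s (s \<pi>0) + \<mu>)"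
        using inA \<pi>0 finA by (subst sum.cong[OF refl, of _ _ "\<lambda>a. if s \<pi>0 = a then 1/(c*w P s a+\<mu>) else 0"]) (auto simp: ind_def sum.delta)
      thus ?thesis unfolding G_def
        by (simp add: diff_divide_distrib sum_subtractf right_diff_distrib sum.distrib[symmetric])
    qed
    have bnd: "w P s a / (c * w P s a + \<mu>) \<le> 1 / (c + \<mu>)" for s a
    proof -
      have "0 \<le> w P s a" "w P s a \<le> 1" using w01[OF P] by auto
      moreover have "0 < c * w P s a + \<mu>" using argpos[OF P] .
      ultimately show ?thesis using cpos mu
        by (simp add: divide_simps) (simp add: algebra_simps mult_left_le)
    qed
    have "(\<Sum>s\<in>Q. q s * (\<Sum>a\<in>A. w P s a / (c * w P s a + \<mu>))) \<le> (\<Sum>s\<in>Q. q s * (real (card A) / (c + \<mu>)))"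
      using qnn bnd by (intro sum_mono mult_left_mono) (auto intro: order_trans[OF sum_mono[of A _ "\<lambda>_. 1/(c+\<mu>)"]])
    also have "\<dots> = real (card A) / (c + \<mu>)" using qsum by (simp only: sum_distrib_right[symmetric])
    also have "\<dots> \<le> 2 * real (card A)" using cmu cpos mu mult_left_mono[of 1 "2*(c+\<mu>)" "real (card A)"]
      by (simp add: divide_simps algebra_simps)
    finally show ?thesis using G0 G0eq by linarith
  qed
  show ?thesis using P main unfolding \<Delta>_def w_def by blast
qed


lemma mu_props:
  assumes "0 < \<delta>" "\<delta> < 1" "1 \<le> t" "0 < K" "0 < N"
  shows "0 < mu_t \<delta> K N t" "real K * mu_t \<delta> K N t \<le> 1/2"
proof -
  have dt0: "0 < delta_t \<delta> N t" using assms unfolding delta_t_def by simp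
  have "4 * real N * (real t)^2 \<ge> 1 * 1 * 1"
    using assms by (intro mult_mono one_le_power) auto
  hence "delta_t \<delta> N t < 1" using assms unfolding delta_t_def by (simp add: divide_simps)
  hence "ln (1 / delta_t \<delta> N t) > 0" using dt0 by (simp add: ln_div)
  hence "sqrt (ln (1 / delta_t \<delta> N t) / (2 * real K * real t)) > 0" using assms by simp
  thus "0 < mu_t \<delta> K N t" using assms unfolding mu_t_def by simp
  have "mu_t \<delta> K N t \<le> 1 / (2 * real K)" unfolding mu_t_def by simp
  hence "real K * mu_t \<delta> K N t \<le> real K * (1 / (2 * real K))" using assms by (intro mult_left_mono) auto
  thus "real K * mu_t \<delta> K N t \<le> 1/2" using assms by simp
qed

theorem corollary1:
  fixes A :: "'a set" and Pol Pol' :: "('x \<Rightarrow> 'a) set" and D :: "'x measure"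
    and \<delta> :: real and t :: nat
  assumes "finite A" and "A \<noteq> {}"
    and "finite Pol" and "\<forall>\<pi>\<in>Pol. \<forall>x\<in>space D. \<pi> x \<in> A"
    and "prob_space D"
    and "\<forall>\<pi>\<in>Pol. \<pi> \<in> D \<rightarrow>\<^sub>M count_space UNIV"
    and "0 < \<delta>" and "\<delta> < 1"
    and "Pol' \<subseteq> Pol" and "Pol' \<noteq> {}"
    and "1 \<le> t"
  shows "\<exists>P. is_distr Pol' P \<and>
    (\<forall>\<pi>\<in>Pol'. (\<integral>x. 1 / ((1 - real (card A) * mu_t \<delta> (card A) (card Pol) t)
                      * W Pol' P x (\<pi> x) + mu_t \<delta> (card A) (card Pol) t) \<partial>D)
               \<le> 2 * real (card A))"
proof -
  note a = assms
  define \<mu> where "\<mu> = mu_t \<delta> (card A) (card Pol) t"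
  define c where "c = 1 - real (card A) * \<mu>"
  have K0: "0 < card A" using a by (simp add: card_gt_0_iff)
  have N0: "0 < card Pol" using a by (metis card_gt_0_iff subset_empty)
  note mp = mu_props[OF a(7,8,11) K0 N0]
  have mu: "0 < \<mu>" and cge: "1/2 \<le> c" using mp unfolding \<mu>_def c_def by auto
  have finP: "finite Pol'" using a rev_finite_subset by blast
  define Q where "Q = PiE Pol' (\<lambda>_. A)"
  define E where "E = (\<lambda>s. {x\<in>space D. \<forall>\<pi>\<in>Pol'. \<pi> x = s \<pi>})"
  define q where "q = (\<lambda>s. measure D (E s))"
  define p where "p = (\<lambda>x. restrict (\<lambda>\<pi>. \<pi> x) Pol')"
  have finQ: "finite Q" unfolding Q_def using finP a(1) by (simp add: finite_PiE)
  have Esets: "E s \<in> sets D" for s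
    unfolding E_def
  proof (rule sets.sets_Collect_finite_All[OF _ finP])
    fix \<pi> assume "\<pi> \<in> Pol'"
    hence m: "\<pi> \<in> D \<rightarrow>\<^sub>M count_space UNIV" using a by auto
    have "{x \<in> space D. \<pi> x = s \<pi>} = \<pi> -` {s \<pi>} \<inter> space D" by auto
    also have "\<dots> \<in> sets D" using measurable_sets[OF m] by simp
    finally show "{x \<in> space D. \<pi> x = s \<pi>} \<in> sets D" .
  qed
  have pQ: "p x \<in> Q" if "x \<in> space D" for x
    using that a(4,9) unfolding p_def Q_def by auto
  have indE: "indicator (E s) x = (if p x = s then 1 else (0::real))" if "x \<in> space D" "s \<in> Q" for x s
  proof -
    have "x \<in> E s \<longleftrightarrow> p x = s"
      using that unfolding E_def p_def Q_def by (auto simp: PiE_iff extensional_def)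
    thus ?thesis by (simp add: indicator_def)
  qed
  have L: "(\<integral>x. h (p x) \<partial>D) = (\<Sum>s\<in>Q. h s * q s)" for h :: "(('x\<Rightarrow>'a)\<Rightarrow>'a) \<Rightarrow> real"
  proof -
    have "(\<integral>x. h (p x) \<partial>D) = (\<integral>x. (\<Sum>s\<in>Q. h s * indicator (E s) x) \<partial>D)"
    proof (rule Bochner_Integration.integral_cong[OF refl])
      fix x assume x: "x \<in> space D"
      have "(\<Sum>s\<in>Q. h s * indicator (E s) x) = (\<Sum>s\<in>Q. if p x = s then h s else 0)"
        using x indE by (intro sum.cong) auto
      also have "\<dots> = h (p x)" using finQ pQ[OF x] by (simp add: sum.delta)
      finally show "h (p x) = (\<Sum>s\<in>Q. h s * indicator (E s) x)" by simp
    qed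
    also have "\<dots> = (\<Sum>s\<in>Q. (\<integral>x. h s * indicator (E s) x \<partial>D))"
    proof (rule Bochner_Integration.integral_sum)
      fix s assume "s \<in> Q"
      have "emeasure D (E s) < \<infinity>"
        using order.strict_trans1[OF prob_space.emeasure_le_1[OF a(5), of "E s"] ennreal_one_less_top]
        by (simp only: infinity_ennreal_def)
      hence I: "integrable D (indicator (E s) :: 'x \<Rightarrow> real)" using Esets by (rule_tac integrable_real_indicator)
      show "integrable D (\<lambda>x. h s * indicator (E s) x)" using integrable_mult_right[of "h s" D "indicator (E s)"] I by blast
    qed
    also have "\<dots> = (\<Sum>s\<in>Q. h s * q s)"
      using Esets unfolding q_def by (simp add: Int_absorb2 sets.sets_into_space)
    finally show ?thesis .
  qed
  have qsum: "(\<Sum>s\<in>Q. q s) = 1"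
    using L[of "\<lambda>_. 1"] prob_space.prob_space[OF a(5)] by simp
  have qnn: "\<forall>s\<in>Q. q s \<ge> 0" unfolding q_def by simp
  have inA: "\<forall>s\<in>Q. \<forall>\<pi>\<in>Pol'. s \<pi> \<in> A" unfolding Q_def by auto
  obtain P where P: "is_distr Pol' P" and PB: "\<forall>\<pi>0\<in>Pol'.
     (\<Sum>s\<in>Q. q s / (c * (\<Sum>\<pi>\<in>{\<pi>\<in>Pol'. s \<pi> = s \<pi>0}. P \<pi>) + \<mu>)) \<le> 2 * real (card A)"
  proof -
    have "0 < c" "1/2 \<le> c + \<mu>" using cge mu by auto
    thus ?thesis using that finite_main[OF finQ finP a(10) a(1) qnn qsum inA mu] by blast
  qed
  show ?thesis unfolding \<mu>_def[symmetric] c_def[symmetric]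
  proof (intro exI[of _ P] conjI ballI P)
    fix \<pi>0 assume \<pi>0: "\<pi>0 \<in> Pol'"
    define h :: "(('x\<Rightarrow>'a)\<Rightarrow>'a) \<Rightarrow> real" where "h = (\<lambda>s. 1 / (c * (\<Sum>\<pi>\<in>{\<pi>\<in>Pol'. s \<pi> = s \<pi>0}. P \<pi>) + \<mu>))"
    have "(\<integral>x. 1 / (c * W Pol' P x (\<pi>0 x) + \<mu>) \<partial>D) = (\<integral>x. h (p x) \<partial>D)"
    proof (rule Bochner_Integration.integral_cong[OF refl])
      fix x assume "x \<in> space D"
      have "{\<pi>\<in>Pol'. p x \<pi> = p x \<pi>0} = {\<pi>\<in>Pol'. \<pi> x = \<pi>0 x}" using \<pi>0 unfolding p_def by auto
      thus "1 / (c * W Pol' P x (\<pi>0 x) + \<mu>) = h (p x)" unfolding h_def W_def by simp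
    qed
    also have "\<dots> = (\<Sum>s\<in>Q. q s / (c * (\<Sum>\<pi>\<in>{\<pi>\<in>Pol'. s \<pi> = s \<pi>0}. P \<pi>) + \<mu>))"
      unfolding L[of h] unfolding h_def by simp
    also have "\<dots> \<le> 2 * real (card A)" using PB \<pi>0 by blast
    finally show "(\<integral>x. 1 / (c * W Pol' P x (\<pi>0 x) + \<mu>) \<partial>D) \<le> 2 * real (card A)" .
  qed
qed

end
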